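(* Let $G=(V,E)$ be a graph with nonnegative edge lengths, root $r$, and integer demands $d_v>0$ on a set $\mathcal{D}$ of demand nodes, with total demand $D$. Fix $\epsilon>0$, $\alpha>1$, $\beta\ge\frac{\alpha+1}{\alpha-1}$, $\gamma>1$, $\delta>1$. Let $L\subseteq\{0,\dots,K\}$ and the cores $C_i$ ($i\in L$) be produced by Procedure 1 below, and let $T$ be produced by Procedure 2 below. Then $T$ is a tree and spans all demand nodes. Procedure 1: let $K=\lceil\log_{1+\epsilon}D\rceil$, $M_i=(1+\epsilon)^i$, $A_i(x)=\min\{x,M_i\}$; (1) for each $i=0,\dots,K$ let $T_i$ be a routing tree returned by a deterministic $\lambda$-approximation algorithm for SSRoB with cost function $A_i$; (2) for $i=1,\dots,K$ increasing, if $A_i(T_{i-1})<A_i(T_i)$ set $T_i\leftarrow T_{i-1}$; (3) for $i=K-1,\dots,0$ decreasing, if $A_i(T_{i+1})<A_i(T_i)$ set $T_i\leftarrow T_{i+1}$; (4) compute $C_i,B_i,R_i$ for each resulting $T_i$; (5) $L_B=\emptyset$, $B=\infty$; for $i=0,\dots,K$ increasing, if $B_i<B/\gamma$ add $i$ to $L_B$ and set $B\leftarrow B_i$; (6) $L=\emptyset$, $R=\infty$; for $i\in L_B$ decreasing, if $R_i<R/\delta$ add $i$ to $L$ and set $R\leftarrow R_i$. Procedure 2: set $T=\{r\}$; for each $i\in L$ in decreasing order, let $T'$ be an $(\alpha,\beta)$-LAST of the graph $(G/T)[C_i]$ rooted at the vertex obtained by contracting $T$, and set $T\leftarrow T\cup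 T'$.
   Context: A routing tree is a tree in $G$ containing $r$ and all demand nodes; each demand node $v$ sends $d_v$ units of flow to $r$ along its unique tree path, and $x_e$ is the total flow on edge $e$; $f(T)=\sum_{e\in T}l_ef(x_e)$. SSRoB with parameter $M$: find a routing tree minimizing $A(T)$ for $A(x)=\min\{x,M\}$; a $\lambda$-approximation returns a tree of cost at most $\lambda$ times optimal. For a routing tree $T_i$: rent cost $R_i=\sum_{e\in T_i,\,x_e<M_i} l_e A_i(x_e)$, normalized buy cost $B_i=\sum_{e\in T_i,\,x_e\ge M_i} l_e$, and the core $C_i$ consists of $r$ together with all vertices incident to edges $e\in T_i$ with $x_e\ge M_i$. $G/T$ denotes $G$ with the vertices of $T$ contracted to a single vertex, and $(G/T)[C_i]$ is its induced subgraph on $C_i$ (together with the contracted vertex); edges of $T'$ are identified with the corresponding edges of $G$. For $\alpha,\beta\ge1$, an $(\alpha,\beta)$-light approximate shortest-path tree ($(\alpha,\beta)$-LAST) of a graph $H$ with root $\rho$ is a spanning tree of $H$ in which every vertex's tree distance to $\rho$ is at most $\alpha$ times its shortest-path distance to $\rho$ in $H$, and whose total edge length is at most $\beta$ times the weight of a minimum spanning tree of $H$; such trees exist (and are efficiently computable) whenever $\alpha>1$ and $\beta\ge\frac{\alpha+1}{\alpha-1}$. *)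

theory Defs
  imports Complex_Main
begin

text \<open>An edge e has the (unordered) endpoints fst (en e) and snd (en e).
  Walks are given by a vertex list vs and an edge list es with length vs = length es + 1.\<close>

fun iswalk :: "'e set \<Rightarrow> ('e \<Rightarrow> 'v \<times> 'v) \<Rightarrow> 'v list \<Rightarrow> 'e list \<Rightarrow> bool" where
  "iswalk F en [u] [] = True"
| "iswalk F en (u # w # vs) (e # es) =
     (e \<in> F \<and> (en e = (u, w) \<or> en e = (w, u)) \<and> iswalk F en (w # vs) es)"
| "iswalk F en _ _ = False"

definition connected_on :: "('e \<Rightarrow> 'v \<times> 'v) \<Rightarrow> 'v set \<Rightarrow> 'e set \<Rightarrow> bool" where
  "connected_on en U F \<longleftrightarrow>
     (\<forall>u\<in>U. \<forall>v\<in>U. \<exists>vs es. iswalk F en vs es \<and> hd vs = u \<and> last vs = v)"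

definition has_cycle :: "('e \<Rightarrow> 'v \<times> 'v) \<Rightarrow> 'e set \<Rightarrow> bool" where
  "has_cycle en F \<longleftrightarrow>
     (\<exists>vs es. iswalk F en vs es \<and> es \<noteq> [] \<and> distinct es \<and> hd vs = last vs \<and> distinct (tl vs))"

definition is_tree :: "('e \<Rightarrow> 'v \<times> 'v) \<Rightarrow> 'v set \<Rightarrow> 'e set \<Rightarrow> bool" where
  "is_tree en U F \<longleftrightarrow> U \<noteq> {} \<and> (\<forall>e\<in>F. fst (en e) \<in> U \<and> snd (en e) \<in> U)
      \<and> connected_on en U F \<and> \<not> has_cycle en F"

definition gdist :: "('e \<Rightarrow> 'v \<times> 'v) \<Rightarrow> ('e \<Rightarrow> real) \<Rightarrow> 'e set \<Rightarrow> 'v \<Rightarrow> 'v \<Rightarrow> real" where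
  "gdist en l F u v =
     Inf {sum_list (map l es) | vs es. iswalk F en vs es \<and> hd vs = u \<and> last vs = v}"

definition mst_weight :: "('e \<Rightarrow> 'v \<times> 'v) \<Rightarrow> ('e \<Rightarrow> real) \<Rightarrow> 'v set \<Rightarrow> 'e set \<Rightarrow> real" where
  "mst_weight en l W FH = Inf {sum l F | F. F \<subseteq> FH \<and> is_tree en W F}"

definition is_LAST ::
  "real \<Rightarrow> real \<Rightarrow> ('e \<Rightarrow> 'v \<times> 'v) \<Rightarrow> ('e \<Rightarrow> real) \<Rightarrow> 'v set \<Rightarrow> 'e set \<Rightarrow> 'v \<Rightarrow> 'e set \<Rightarrow> bool" where
  "is_LAST \<alpha> \<beta> en l W FH \<rho> F' \<longleftrightarrow>
     F' \<subseteq> FH \<and> is_tree en W F'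
     \<and> (\<forall>v\<in>W. gdist en l F' \<rho> v \<le> \<alpha> * gdist en l FH \<rho> v)
     \<and> sum l F' \<le> \<beta> * mst_weight en l W FH"

record ('v, 'e) inst =
  gV :: "'v set"
  gE :: "'e set"
  gends :: "'e \<Rightarrow> 'v \<times> 'v"
  glen :: "'e \<Rightarrow> real"
  groot :: 'v
  gDem :: "'v set"
  gd :: "'v \<Rightarrow> nat"

definition valid_inst :: "('v, 'e) inst \<Rightarrow> bool" where
  "valid_inst G \<longleftrightarrow> finite (gV G) \<and> finite (gE G)
     \<and> (\<forall>e\<in>gE G. fst (gends G e) \<in> gV G \<and> snd (gends G e) \<in> gV G
                  \<and> fst (gends G e) \<noteq> snd (gends G e))
     \<and> (\<forall>e\<in>gE G. glen G e \<ge> 0)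
     \<and> groot G \<in> gV G \<and> gDem G \<subseteq> gV G \<and> gDem G \<noteq> {}
     \<and> (\<forall>v\<in>gDem G. gd G v > 0)"

definition total_demand :: "('v, 'e) inst \<Rightarrow> nat" where
  "total_demand G = (\<Sum>v\<in>gDem G. gd G v)"

definition tree_in :: "('v, 'e) inst \<Rightarrow> 'v set \<times> 'e set \<Rightarrow> bool" where
  "tree_in G T \<longleftrightarrow> fst T \<subseteq> gV G \<and> snd T \<subseteq> gE G \<and> is_tree (gends G) (fst T) (snd T)"

definition routing_tree :: "('v, 'e) inst \<Rightarrow> 'v set \<times> 'e set \<Rightarrow> bool" where
  "routing_tree G T \<longleftrightarrow> tree_in G T \<and> groot G \<in> fst T \<and> gDem G \<subseteq> fst T"

definition flow :: "('v, 'e) inst \<Rightarrow> 'v set \<times> 'e set \<Rightarrow> 'e \<Rightarrow> real" where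
  "flow G T e = (\<Sum>v\<in>gDem G.
      if (\<exists>vs es. iswalk (snd T) (gends G) vs es \<and> hd vs = v \<and> last vs = groot G
                  \<and> distinct vs \<and> e \<in> set es)
      then real (gd G v) else 0)"

definition costA :: "('v, 'e) inst \<Rightarrow> real \<Rightarrow> 'v set \<times> 'e set \<Rightarrow> real" where
  "costA G M T = (\<Sum>e\<in>snd T. glen G e * min (flow G T e) M)"

definition rent_cost :: "('v, 'e) inst \<Rightarrow> real \<Rightarrow> 'v set \<times> 'e set \<Rightarrow> real" where
  "rent_cost G M T = (\<Sum>e\<in>{e\<in>snd T. flow G T e < M}. glen G e * min (flow G T e) M)"

definition buy_cost :: "('v, 'e) inst \<Rightarrow> real \<Rightarrow> 'v set \<times> 'e set \<Rightarrow> real" where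
  "buy_cost G M T = (\<Sum>e\<in>{e\<in>snd T. flow G T e \<ge> M}. glen G e)"

definition core :: "('v, 'e) inst \<Rightarrow> real \<Rightarrow> 'v set \<times> 'e set \<Rightarrow> 'v set" where
  "core G M T = {groot G} \<union>
     {v. \<exists>e\<in>snd T. flow G T e \<ge> M \<and> (v = fst (gends G e) \<or> v = snd (gends G e))}"

definition Kpar :: "real \<Rightarrow> ('v, 'e) inst \<Rightarrow> nat" where
  "Kpar \<epsilon> G = nat \<lceil>log (1 + \<epsilon>) (real (total_demand G))\<rceil>"

definition Mpar :: "real \<Rightarrow> nat \<Rightarrow> real" where
  "Mpar \<epsilon> i = (1 + \<epsilon>) ^ i"

text \<open>Step (2): for i = 1..K increasing, replace T_i by (the updated) T_{i-1} if strictly cheaper.\<close>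
fun step2 :: "(nat \<Rightarrow> 't \<Rightarrow> real) \<Rightarrow> (nat \<Rightarrow> 't) \<Rightarrow> nat \<Rightarrow> 't" where
  "step2 c T 0 = T 0"
| "step2 c T (Suc i) = (let P = step2 c T i in if c (Suc i) P < c (Suc i) (T (Suc i)) then P else T (Suc i))"

text \<open>Step (3): for i = K-1..0 decreasing; step3 c T K j is the final tree with index K - j.\<close>
fun step3 :: "(nat \<Rightarrow> 't \<Rightarrow> real) \<Rightarrow> (nat \<Rightarrow> 't) \<Rightarrow> nat \<Rightarrow> nat \<Rightarrow> 't" where
  "step3 c T K 0 = T K"
| "step3 c T K (Suc j) = (let i = K - Suc j; P = step3 c T K j in
                           if c i P < c i (T i) then P else T i)"

text \<open>Steps (5)/(6): scan indices in the given order, keep i if its value is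
  smaller than the current threshold divided by the factor (None = infinity).\<close>
fun scan :: "real \<Rightarrow> (nat \<Rightarrow> real) \<Rightarrow> nat list \<Rightarrow> real option \<Rightarrow> nat list" where
  "scan g b [] B = []"
| "scan g b (i # is) B =
     (if (case B of None \<Rightarrow> True | Some B' \<Rightarrow> b i < B' / g)
      then i # scan g b is (Some (b i)) else scan g b is B)"

text \<open>The trees after steps (1)-(3), given the trees Tsel i from step (1).\<close>
definition final_trees :: "real \<Rightarrow> ('v, 'e) inst \<Rightarrow> (nat \<Rightarrow> 'v set \<times> 'e set) \<Rightarrow> nat \<Rightarrow> 'v set \<times> 'e set" where
  "final_trees \<epsilon> G Tsel i =
     (let c = (\<lambda>j T. costA G (Mpar \<epsilon> j) T); K = Kpar \<epsilon> G
      in step3 c (step2 c Tsel) K (K - i))"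

text \<open>The list L (in decreasing order) produced by Procedure 1.\<close>
definition proc1_L :: "real \<Rightarrow> real \<Rightarrow> real \<Rightarrow> ('v, 'e) inst \<Rightarrow> (nat \<Rightarrow> 'v set \<times> 'e set) \<Rightarrow> nat list" where
  "proc1_L \<epsilon> \<gamma> \<delta> G Tsel =
     (let T = final_trees \<epsilon> G Tsel; K = Kpar \<epsilon> G;
          LB = scan \<gamma> (\<lambda>i. buy_cost G (Mpar \<epsilon> i) (T i)) [0..<Suc K] None
      in scan \<delta> (\<lambda>i. rent_cost G (Mpar \<epsilon> i) (T i)) (rev LB) None)"

definition proc1_core :: "real \<Rightarrow> ('v, 'e) inst \<Rightarrow> (nat \<Rightarrow> 'v set \<times> 'e set) \<Rightarrow> nat \<Rightarrow> 'v set" where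
  "proc1_core \<epsilon> G Tsel i = core G (Mpar \<epsilon> i) (final_trees \<epsilon> G Tsel i)"

text \<open>Contraction of the vertex set U (containing the root) into the root vertex.\<close>
definition cmap :: "'v set \<Rightarrow> 'v \<Rightarrow> 'v \<Rightarrow> 'v" where
  "cmap U r v = (if v \<in> U then r else v)"

definition contr_ends :: "('v, 'e) inst \<Rightarrow> 'v set \<Rightarrow> 'e \<Rightarrow> 'v \<times> 'v" where
  "contr_ends G U e = (cmap U (groot G) (fst (gends G e)), cmap U (groot G) (snd (gends G e)))"

text \<open>Vertices of (G/T)[C]: the vertices of C outside T, plus the contracted vertex.\<close>
definition contr_verts :: "('v, 'e) inst \<Rightarrow> 'v set \<Rightarrow> 'v set \<Rightarrow> 'v set" where
  "contr_verts G U C = (C - U) \<union> {groot G}"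

text \<open>Edges of (G/T)[C]: edges of G/T (edges not inside T) with both ends in the vertex set.\<close>
definition contr_edges :: "('v, 'e) inst \<Rightarrow> 'v set \<Rightarrow> 'v set \<Rightarrow> 'e set" where
  "contr_edges G U C = {e \<in> gE G. fst (contr_ends G U e) \<in> contr_verts G U C
       \<and> snd (contr_ends G U e) \<in> contr_verts G U C
       \<and> fst (contr_ends G U e) \<noteq> snd (contr_ends G U e)}"

text \<open>proc2 \<alpha> \<beta> G Cs T T'': starting from tree T and processing cores Cs in order,
  with some admissible choice of LASTs, the procedure ends with T''.\<close>
fun proc2 :: "real \<Rightarrow> real \<Rightarrow> ('v, 'e) inst \<Rightarrow> 'v set list \<Rightarrow> 'v set \<times> 'e set \<Rightarrow> 'v set \<times> 'e set \<Rightarrow> bool" where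
  "proc2 \<alpha> \<beta> G [] T Res \<longleftrightarrow> Res = T"
| "proc2 \<alpha> \<beta> G (C # Cs) T Res \<longleftrightarrow>
     (\<exists>F'. is_LAST \<alpha> \<beta> (contr_ends G (fst T)) (glen G)
              (contr_verts G (fst T) C) (contr_edges G (fst T) C) (groot G) F'
          \<and> proc2 \<alpha> \<beta> G Cs (fst T \<union> C, snd T \<union> F') Res)"

end

theory Submission
  imports Defs
begin


lemma walk_len: "iswalk F en vs es \<Longrightarrow> length vs = Suc (length es)"
  by (induction F en vs es rule: iswalk.induct) auto

lemma walk_ne: "iswalk F en vs es \<Longrightarrow> vs \<noteq> []"
  using walk_len by fastforce

lemma walk_edges: "iswalk F en vs es \<Longrightarrow> set es \<subseteq> F"
  by (induction F en vs es rule: iswalk.induct) auto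

lemma walk_restrict: "iswalk F en vs es \<Longrightarrow> set es \<subseteq> F2 \<Longrightarrow> iswalk F2 en vs es"
  by (induction F en vs es rule: iswalk.induct) auto

lemma walk_mono: "iswalk F en vs es \<Longrightarrow> F \<subseteq> F2 \<Longrightarrow> iswalk F2 en vs es"
proof -
  assume a: "iswalk F en vs es" "F \<subseteq> F2"
  have "set es \<subseteq> F2" using walk_edges[OF a(1)] a(2) by (rule subset_trans)
  then show ?thesis using walk_restrict[OF a(1)] by simp
qed

lemma walk_append: "iswalk F en vs es \<Longrightarrow> iswalk F en ws fs \<Longrightarrow> last vs = hd ws
   \<Longrightarrow> iswalk F en (vs @ tl ws) (es @ fs)"
proof (induction F en vs es rule: iswalk.induct)
  case (1 F en u)
  then show ?case using walk_ne[OF 1(1)] by (cases ws) auto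
next
  case (2 F en u w vs e es)
  then show ?case by auto
qed auto

lemma walk_edge: "e \<in> F \<Longrightarrow> en e = (p, q) \<or> en e = (q, p) \<Longrightarrow> iswalk F en [p, q] [e]"
  by auto

lemma walk_rev: "iswalk F en vs es \<Longrightarrow> iswalk F en (rev vs) (rev es)"
proof (induction F en vs es rule: iswalk.induct)
  case (2 F en u w vs e es)
  have a: "iswalk F en [w, u] [e]" using 2 by auto
  have ih: "iswalk F en (rev (w # vs)) (rev es)" using 2 by auto
  have "last (rev (w # vs)) = hd [w, u]" by simp
  from walk_append[OF ih a this] show ?case by simp
qed auto

lemma walk_drop: "iswalk F en vs es \<Longrightarrow> i < length vs \<Longrightarrow> iswalk F en (drop i vs) (drop i es)"
proof (induction F en vs es arbitrary: i rule: iswalk.induct)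
  case (2 F en u w vs e es)
  then show ?case by (cases i) auto
qed auto

lemma walk_take: "iswalk F en vs es \<Longrightarrow> k < length vs \<Longrightarrow> iswalk F en (take (Suc k) vs) (take k es)"
proof (induction F en vs es arbitrary: k rule: iswalk.induct)
  case (2 F en u w vs e es)
  then show ?case by (cases k) auto
qed auto

lemma walk_path: "iswalk F en vs es \<Longrightarrow>
   \<exists>vs' es'. iswalk F en vs' es' \<and> hd vs' = hd vs \<and> last vs' = last vs \<and> distinct vs'"
proof (induction F en vs es rule: iswalk.induct)
  case (1 F en u)
  then show ?case by (intro exI[of _ "[u]"] exI[of _ "[]"]) auto
next
  case (2 F en u w vs e es)
  then obtain p ps where p: "iswalk F en p ps" "hd p = w" "last p = last (w # vs)" "distinct p" by auto
  show ?case
  proof (cases "u \<in> set p")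
    case False
    have a: "iswalk F en [u, w] [e]" using 2 by auto
    obtain rest where pr: "p = w # rest" using p(2) walk_ne[OF p(1)] by (cases p) auto
    have "iswalk F en (u # p) (e # ps)" using a p(1) unfolding pr by simp
    then show ?thesis using p False walk_ne[OF p(1)] by (intro exI[of _ "u # p"] exI[of _ "e # ps"]) auto
  next
    case True
    then obtain i where i: "i < length p" "p ! i = u" by (meson in_set_conv_nth)
    have "iswalk F en (drop i p) (drop i ps)" using walk_drop[OF p(1) i(1)] .
    moreover have "hd (drop i p) = u" using i by (simp add: hd_drop_conv_nth)
    moreover have "last (drop i p) = last p" using i by simp
    moreover have "distinct (drop i p)" using p(4) by simp
    ultimately show ?thesis using p(3) by (intro exI[of _ "drop i p"] exI[of _ "drop i ps"]) auto
  qed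
qed auto

lemma trail_cycle: "iswalk F en vs es \<Longrightarrow> es \<noteq> [] \<Longrightarrow> distinct es \<Longrightarrow> hd vs = last vs \<Longrightarrow> has_cycle en F"
proof (induction "length es" arbitrary: vs es rule: less_induct)
  case less
  show ?case
  proof (cases "distinct (tl vs)")
    case True
    then show ?thesis using less.prems unfolding has_cycle_def by blast
  next
    case False
    have lv: "length vs = Suc (length es)" using walk_len[OF less.prems(1)] .
    from False obtain i j where ij: "i < length (tl vs)" "j < length (tl vs)" "i \<noteq> j" "tl vs ! i = tl vs ! j"
      unfolding distinct_conv_nth by blast
    then obtain a c where ac: "a < c" "c < length es" "vs ! Suc a = vs ! Suc c"
      using lv by (cases "i < j") (auto simp: nth_tl intro: that[of i j] that[of j i])
    define ws where "ws = take (Suc (c - a)) (drop (Suc a) vs)"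
    define fs where "fs = take (c - a) (drop (Suc a) es)"
    have w1: "iswalk F en (drop (Suc a) vs) (drop (Suc a) es)"
      using walk_drop[OF less.prems(1)] ac lv by simp
    have w: "iswalk F en ws fs" unfolding ws_def fs_def
      using walk_take[OF w1] ac lv by simp
    have lf: "length fs = c - a" unfolding fs_def using ac by simp
    have "hd ws = vs ! Suc a" unfolding ws_def using ac lv by (simp add: hd_conv_nth)
    moreover have "last ws = vs ! Suc c" unfolding ws_def using ac lv
      by (simp add: last_conv_nth)
    ultimately have hl: "hd ws = last ws" using ac by simp
    have "distinct fs" unfolding fs_def using less.prems(3) by (simp add: distinct_take distinct_drop)
    moreover have "fs \<noteq> []" using lf ac by auto
    moreover have "length fs < length es" using lf ac by simp
    ultimately show ?thesis using less.hyps w hl by blast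
  qed
qed



lemma cmap_ne_r: "cmap U r v \<noteq> r \<Longrightarrow> v \<notin> U \<and> cmap U r v = v"
  by (auto simp: cmap_def split: if_splits)

lemma cmap_eq_r: "r \<in> U \<Longrightarrow> cmap U r v = r \<Longrightarrow> v \<in> U"
  by (auto simp: cmap_def split: if_splits)

lemma walk_map: "iswalk F en vs es \<Longrightarrow>
  iswalk F (\<lambda>e. (f (fst (en e)), f (snd (en e)))) (map f vs) es"
  by (induction F en vs es rule: iswalk.induct) auto

lemma walk_filter: "iswalk A en vs es \<Longrightarrow> (\<forall>e\<in>A - S. fst (en e) = snd (en e)) \<Longrightarrow>
   \<exists>vs'. iswalk S en vs' (filter (\<lambda>e. e \<in> S) es) \<and> hd vs' = hd vs \<and> last vs' = last vs"
proof (induction A en vs es rule: iswalk.induct)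
  case (1 F en u)
  then show ?case by (intro exI[of _ "[u]"]) auto
next
  case (2 A en u w vs e es)
  then obtain vs' where v: "iswalk S en vs' (filter (\<lambda>e. e \<in> S) es)" "hd vs' = w" "last vs' = last (w # vs)"
    by auto
  obtain rest where vr: "vs' = w # rest" using v(2) walk_ne[OF v(1)] by (cases vs') auto
  show ?case
  proof (cases "e \<in> S")
    case True
    then show ?thesis using v "2.prems"(1) vr by (intro exI[of _ "u # vs'"]) auto
  next
    case False
    have ee: "en e = (u, w) \<or> en e = (w, u)" "e \<in> A" using "2.prems" by auto
    have "fst (en e) = snd (en e)" using "2.prems"(2) ee(2) False by blast
    then have "u = w" using ee(1) by auto
    then show ?thesis using v False by (intro exI[of _ vs']) auto
  qed
qed auto

lemma lift:
  assumes "iswalk F' cen ws es"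
    and cen: "cen = (\<lambda>e. (cmap U r (fst (en e)), cmap U r (snd (en e))))"
    and con: "connected_on en U F" and rU: "r \<in> U"
    and "cmap U r a = hd ws"
  shows "\<exists>vs fs. iswalk (F \<union> F') en vs fs \<and> hd vs = a \<and> cmap U r (last vs) = last ws"
  using assms(1,2,5)
proof (induction F' cen ws es arbitrary: a rule: iswalk.induct)
  case (1 F' cen u)
  then show ?case by (intro exI[of _ "[a]"] exI[of _ "[]"]) auto
next
  case (2 F' cen u w ws e es)
  note cen = "2.prems"(2)
  have eF: "e \<in> F'" and ce: "cen e = (u, w) \<or> cen e = (w, u)" and rw: "iswalk F' cen (w # ws) es"
    using 2 by auto
  obtain p q where pq: "en e = (p, q) \<or> en e = (q, p)" "cmap U r p = u" "cmap U r q = w"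
  proof -
    from ce show ?thesis
    proof
      assume a: "cen e = (u, w)"
      have "cmap U r (fst (en e)) = u \<and> cmap U r (snd (en e)) = w" using a cen by simp
      then show ?thesis using that[of "fst (en e)" "snd (en e)"] by auto
    next
      assume a: "cen e = (w, u)"
      have "cmap U r (fst (en e)) = w \<and> cmap U r (snd (en e)) = u" using a cen by simp
      then show ?thesis using that[of "snd (en e)" "fst (en e)"] by auto
    qed
  qed
  obtain vs fs where r1: "iswalk (F \<union> F') en vs fs" "hd vs = q" "cmap U r (last vs) = last (w # ws)"
    using "2.IH"[OF rw cen, of q] pq(3) by auto
  have ed: "iswalk (F \<union> F') en [p, q] [e]" using eF pq by auto
  have "\<exists>xs gs. iswalk (F \<union> F') en xs gs \<and> hd xs = a \<and> last xs = p"
  proof (cases "u = r")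
    case True
    have "a \<in> U" using cmap_eq_r[OF rU] "2.prems"(3) True by simp
    moreover have "p \<in> U" using cmap_eq_r[OF rU] pq(2) True by simp
    ultimately obtain xs gs where "iswalk F en xs gs" "hd xs = a" "last xs = p"
      using con unfolding connected_on_def by blast
    then show ?thesis using walk_mono[of F en xs gs "F \<union> F'"] by blast
  next
    case False
    have "a = p" using cmap_ne_r[of U r a] cmap_ne_r[of U r p] False "2.prems"(3) pq(2) by auto
    then show ?thesis by (intro exI[of _ "[a]"] exI[of _ "[]"]) auto
  qed
  then obtain xs gs where x: "iswalk (F \<union> F') en xs gs" "hd xs = a" "last xs = p" by blast
  have w2: "iswalk (F \<union> F') en (xs @ tl [p, q]) (gs @ [e])" using walk_append[OF x(1) ed] x(3) by simp
  have w3: "iswalk (F \<union> F') en ((xs @ tl [p, q]) @ tl vs) ((gs @ [e]) @ fs)"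
    using walk_append[OF w2 r1(1)] r1(2) by simp
  have "hd ((xs @ tl [p, q]) @ tl vs) = a" using x(2) walk_ne[OF x(1)] by simp
  moreover have "last ((xs @ tl [p, q]) @ tl vs) = last vs"
    using r1(2) walk_ne[OF r1(1)] by (cases vs) auto
  ultimately show ?case using w3 r1(3) by auto
qed auto

lemma step_tree:
  assumes tr: "is_tree en U F" and rU: "r \<in> U"
    and cen: "cen = (\<lambda>e. (cmap U r (fst (en e)), cmap U r (snd (en e))))"
    and tr': "is_tree cen ((C - U) \<union> {r}) F'"
  shows "is_tree en (U \<union> C) (F \<union> F')"
proof -
  have Fin: "\<forall>e\<in>F. fst (en e) \<in> U \<and> snd (en e) \<in> U" and con: "connected_on en U F"
    and nc: "\<not> has_cycle en F" using tr unfolding is_tree_def by auto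
  have F'in: "\<forall>e\<in>F'. fst (cen e) \<in> (C - U) \<union> {r} \<and> snd (cen e) \<in> (C - U) \<union> {r}"
    and con': "connected_on cen ((C - U) \<union> {r}) F'"
    and nc': "\<not> has_cycle cen F'" using tr' unfolding is_tree_def by auto
  have ends: "\<forall>e\<in>F \<union> F'. fst (en e) \<in> U \<union> C \<and> snd (en e) \<in> U \<union> C"
  proof
    fix e assume e: "e \<in> F \<union> F'"
    show "fst (en e) \<in> U \<union> C \<and> snd (en e) \<in> U \<union> C"
    proof (cases "e \<in> F")
      case True then show ?thesis using Fin by auto
    next
      case False
      then have "e \<in> F'" using e by auto
      then show ?thesis using F'in rU unfolding cen by (auto simp: cmap_def split: if_splits)
    qed
  qed
  have tor: "\<exists>vs es. iswalk (F \<union> F') en vs es \<and> hd vs = x \<and> last vs = r" if x: "x \<in> U \<union> C" for x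
  proof (cases "x \<in> U")
    case True
    then obtain vs es where "iswalk F en vs es" "hd vs = x" "last vs = r"
      using con rU unfolding connected_on_def by blast
    then show ?thesis using walk_mono[of F en vs es "F \<union> F'"] by blast
  next
    case False
    then have "x \<in> (C - U) \<union> {r}" using x by auto
    then obtain ws es where ws: "iswalk F' cen ws es" "hd ws = x" "last ws = r"
      using con' unfolding connected_on_def by blast
    have "cmap U r x = hd ws" using False ws(2) by (simp add: cmap_def)
    from lift[OF ws(1) cen con rU this] obtain vs fs where
      v: "iswalk (F \<union> F') en vs fs" "hd vs = x" "cmap U r (last vs) = r" using ws(3) by auto
    have "last vs \<in> U" using cmap_eq_r[OF rU v(3)] .
    then obtain ys gs where y: "iswalk F en ys gs" "hd ys = last vs" "last ys = r"
      using con rU unfolding connected_on_def by blast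
    have y2: "iswalk (F \<union> F') en ys gs" using walk_mono[OF y(1)] by blast
    have "iswalk (F \<union> F') en (vs @ tl ys) (fs @ gs)" using walk_append[OF v(1) y2] y(2) by simp
    moreover have "hd (vs @ tl ys) = x" using v(2) walk_ne[OF v(1)] by simp
    moreover have "last (vs @ tl ys) = r" using y(2,3) walk_ne[OF y(1)] by (cases ys) auto
    ultimately show ?thesis by blast
  qed
  have conn: "connected_on en (U \<union> C) (F \<union> F')"
    unfolding connected_on_def
  proof (intro ballI)
    fix u v assume "u \<in> U \<union> C" "v \<in> U \<union> C"
    from tor[OF this(1)] obtain vs es where a: "iswalk (F \<union> F') en vs es" "hd vs = u" "last vs = r" by blast
    from tor[OF \<open>v \<in> U \<union> C\<close>] obtain ws fs where b: "iswalk (F \<union> F') en ws fs" "hd ws = v" "last ws = r" by blast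
    have b': "iswalk (F \<union> F') en (rev ws) (rev fs)" using walk_rev[OF b(1)] .
    have "hd (rev ws) = r" using b(3) walk_ne[OF b(1)] by (simp add: hd_rev)
    then have "iswalk (F \<union> F') en (vs @ tl (rev ws)) (es @ rev fs)" using walk_append[OF a(1) b'] a(3) by simp
    moreover have "hd (vs @ tl (rev ws)) = u" using a(2) walk_ne[OF a(1)] by simp
    moreover have "last (vs @ tl (rev ws)) = v"
    proof -
      have "rev ws \<noteq> []" using walk_ne[OF b(1)] by simp
      then have "rev ws = r # tl (rev ws)" using \<open>hd (rev ws) = r\<close> by (cases "rev ws") auto
      moreover have lr: "last (rev ws) = v" using b(2) walk_ne[OF b(1)] by (simp add: last_rev)
      ultimately show ?thesis
      proof (cases "tl (rev ws) = []")
        case True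
        then have "v = r" using \<open>rev ws = r # tl (rev ws)\<close> lr by (metis last.simps)
        then show ?thesis using True a(3) by simp
      next
        case False
        then have "last (tl (rev ws)) = last (rev ws)" by (simp add: last_tl)
        then show ?thesis using False lr by simp
      qed
    qed
    ultimately show "\<exists>vs es. iswalk (F \<union> F') en vs es \<and> hd vs = u \<and> last vs = v" by blast
  qed
  have acyc: "\<not> has_cycle en (F \<union> F')"
  proof
    assume "has_cycle en (F \<union> F')"
    then obtain vs es where c: "iswalk (F \<union> F') en vs es" "es \<noteq> []" "distinct es" "hd vs = last vs"
      "distinct (tl vs)"
      unfolding has_cycle_def by blast
    show False
    proof (cases "set es \<subseteq> F")
      case True
      then have "iswalk F en vs es" using walk_restrict[OF c(1)] by blast
      then have "has_cycle en F" using c unfolding has_cycle_def by blast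
      then show False using nc by simp
    next
      case False
      have m: "iswalk (F \<union> F') cen (map (cmap U r) vs) es"
        using walk_map[OF c(1), of "cmap U r"] unfolding cen .
      have loops: "\<forall>e\<in>(F \<union> F') - F'. fst (cen e) = snd (cen e)"
        using Fin unfolding cen by (auto simp: cmap_def)
      from walk_filter[OF m loops] obtain vs' where
        v: "iswalk F' cen vs' (filter (\<lambda>e. e \<in> F') es)" "hd vs' = hd (map (cmap U r) vs)"
           "last vs' = last (map (cmap U r) vs)" by blast
      have ne: "vs \<noteq> []" using walk_ne[OF c(1)] .
      have "hd vs' = last vs'" using v(2,3) c(4) ne by (simp add: hd_map last_map)
      moreover have "filter (\<lambda>e. e \<in> F') es \<noteq> []"
        using False walk_edges[OF c(1)] by (auto simp: filter_empty_conv)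
      moreover have "distinct (filter (\<lambda>e. e \<in> F') es)" using c(3) by simp
      ultimately have "has_cycle cen F'" using trail_cycle[OF v(1)] by blast
      then show False using nc' by simp
    qed
  qed
  show ?thesis unfolding is_tree_def using ends conn acyc rU by auto
qed



lemma step2_in: "step2 c T i \<in> T ` {..i}"
  by (induction i) (auto simp: Let_def)

lemma step3_in: "(\<forall>j\<le>K. T j \<in> S) \<Longrightarrow> step3 c T K j \<in> S"
  by (induction j) (auto simp: Let_def)

lemma step2_in': "j \<le> K \<Longrightarrow> step2 c T j \<in> T ` {..K}"
  using step2_in[of c T j] by auto

lemma final_in: "final_trees \<epsilon> G Tsel i \<in> Tsel ` {..Kpar \<epsilon> G}"
  unfolding final_trees_def Let_def
  by (rule step3_in) (simp add: step2_in')

lemma final_step: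
  assumes "i < Kpar \<epsilon> G"
  shows "costA G (Mpar \<epsilon> i) (final_trees \<epsilon> G Tsel i) \<le> costA G (Mpar \<epsilon> i) (final_trees \<epsilon> G Tsel (Suc i))"
proof -
  define K where "K = Kpar \<epsilon> G"
  define c where "c = (\<lambda>j T. costA G (Mpar \<epsilon> j) T)"
  have ki: "K - i = Suc (K - Suc i)" "K - Suc (K - Suc i) = i" using assms K_def by auto
  have "final_trees \<epsilon> G Tsel i = step3 c (step2 c Tsel) K (Suc (K - Suc i))"
    unfolding final_trees_def c_def K_def Let_def using ki K_def by simp
  also have "\<dots> = (if c i (final_trees \<epsilon> G Tsel (Suc i)) < c i (step2 c Tsel i)
         then final_trees \<epsilon> G Tsel (Suc i) else step2 c Tsel i)"
    unfolding final_trees_def c_def K_def Let_def using ki K_def by simp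
  finally show ?thesis unfolding c_def by auto
qed

lemma scan_subset: "set (scan g b xs B) \<subseteq> set xs"
  by (induction xs arbitrary: B) (auto split: option.splits)

lemma scan_dec:
  assumes "g > 1" "\<forall>i. b i \<ge> 0"
  shows "B \<ge> 0 \<Longrightarrow> b (m - 1) \<ge> B / g \<Longrightarrow> 0 < m \<Longrightarrow>
     \<forall>i\<in>set (scan g b [m..<m + d] (Some B)). b i < b (i - 1)"
proof (induction d arbitrary: m B)
  case 0
  then show ?case by simp
next
  case (Suc d)
  have eq: "[m..<m + Suc d] = m # [Suc m..<Suc m + d]" by (simp add: upt_conv_Cons)
  show ?case
  proof (cases "b m < B / g")
    case True
    have bm: "b m \<ge> 0" using assms(2) by simp
    have "b m \<le> b m * g" using bm assms(1) by (simp add: mult_le_cancel_left1)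
    then have "b (Suc m - 1) \<ge> b m / g" using assms(1) by (simp add: divide_le_eq)
    then have "\<forall>i\<in>set (scan g b [Suc m..<Suc m + d] (Some (b m))). b i < b (i - 1)"
      using Suc.IH[of "b m" "Suc m"] assms by simp
    then show ?thesis using True Suc.prems eq by auto
  next
    case False
    then have "b (Suc m - 1) \<ge> B / g" by simp
    then have "\<forall>i\<in>set (scan g b [Suc m..<Suc m + d] (Some B)). b i < b (i - 1)"
      using Suc.IH[of B "Suc m"] Suc.prems by simp
    then show ?thesis using False eq by auto
  qed
qed

lemma scan_zero:
  assumes "g > 0" "R 0 = 0"
  shows "(\<forall>x\<in>set xs. R x > 0) \<Longrightarrow> (case B of None \<Rightarrow> True | Some c \<Rightarrow> c > 0) \<Longrightarrow>
     0 \<in> set (scan g R (xs @ [0]) B)"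
proof (induction xs arbitrary: B)
  case Nil
  then show ?case using assms by (auto split: option.splits)
next
  case (Cons x xs)
  then show ?case by (auto split: option.splits)
qed



lemma rt_facts:
  assumes "valid_inst G" "routing_tree G T"
  shows "finite (snd T)" "\<forall>e\<in>snd T. glen G e \<ge> 0" "snd T \<subseteq> gE G"
  using assms unfolding valid_inst_def routing_tree_def tree_in_def
  by (auto intro: finite_subset)

lemma flow_nonneg: "flow G T e \<ge> 0"
  unfolding flow_def by (rule sum_nonneg) auto

lemma flow_nat: "\<exists>n::nat. flow G T e = real n"
proof -
  have "flow G T e = (\<Sum>v\<in>gDem G. real (if (\<exists>vs es. iswalk (snd T) (gends G) vs es \<and> hd vs = v \<and> last vs = groot G
                  \<and> distinct vs \<and> e \<in> set es) then gd G v else 0))"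
    unfolding flow_def by (rule sum.cong) auto
  then show ?thesis by (simp only: of_nat_sum[symmetric]) blast
qed

lemma buy_le:
  assumes "valid_inst G" "routing_tree G T" "M > 0"
  shows "M * buy_cost G M T \<le> costA G M T"
proof -
  note f = rt_facts[OF assms(1,2)]
  have "M * buy_cost G M T = (\<Sum>e\<in>{e\<in>snd T. flow G T e \<ge> M}. glen G e * min (flow G T e) M)"
    unfolding buy_cost_def sum_distrib_left by (rule sum.cong) auto
  also have "\<dots> \<le> costA G M T" unfolding costA_def
    using f assms(3) flow_nonneg[of G T] by (intro sum_mono2) (auto intro!: mult_nonneg_nonneg)
  finally show ?thesis .
qed

lemma rent_nonneg:
  assumes "valid_inst G" "routing_tree G T" "M > 0"
  shows "rent_cost G M T \<ge> 0"
  unfolding rent_cost_def using rt_facts[OF assms(1,2)] assms(3) flow_nonneg[of G T]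
  by (intro sum_nonneg) (auto intro!: mult_nonneg_nonneg)

lemma rent0:
  assumes "valid_inst G" "routing_tree G T" "rent_cost G M T = 0" "0 < M'" "M' \<le> M"
  shows "costA G M' T \<le> M' * buy_cost G M T"
proof -
  note f = rt_facts[OF assms(1,2)]
  define S where "S = {e\<in>snd T. flow G T e \<ge> M}"
  define S' where "S' = {e\<in>snd T. flow G T e < M}"
  have un: "snd T = S \<union> S'" "S \<inter> S' = {}" "finite S" "finite S'"
    unfolding S_def S'_def using f by auto
  have "costA G M' T = (\<Sum>e\<in>S. glen G e * min (flow G T e) M') + (\<Sum>e\<in>S'. glen G e * min (flow G T e) M')"
    unfolding costA_def using un by (simp add: sum.union_disjoint)
  also have "(\<Sum>e\<in>S. glen G e * min (flow G T e) M') \<le> (\<Sum>e\<in>S. glen G e * M')"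
    using f unfolding S_def by (intro sum_mono mult_left_mono) auto
  also have "(\<Sum>e\<in>S'. glen G e * min (flow G T e) M') \<le> (\<Sum>e\<in>S'. glen G e * min (flow G T e) M)"
    using f unfolding S'_def by (intro sum_mono mult_left_mono) auto
  also have "\<dots> = 0" using assms(3) unfolding rent_cost_def S'_def .
  finally show ?thesis unfolding buy_cost_def S_def by (simp add: sum_distrib_left mult.commute)
qed

lemma rent_one:
  assumes "valid_inst G" "routing_tree G T"
  shows "rent_cost G 1 T = 0"
  unfolding rent_cost_def
proof (rule sum.neutral, rule ballI)
  fix e assume "e \<in> {e \<in> snd T. flow G T e < 1}"
  then have "flow G T e < 1" by simp
  moreover obtain n where "flow G T e = real n" using flow_nat[of G T e] by blast
  ultimately have "flow G T e = 0" by simp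
  then show "glen G e * min (flow G T e) 1 = 0" by simp
qed

lemma core_sub:
  assumes "valid_inst G" "routing_tree G T"
  shows "core G M T \<subseteq> gV G"
  using assms rt_facts(3)[OF assms] unfolding core_def valid_inst_def by auto

lemma dem_core:
  assumes "valid_inst G" "routing_tree G T"
  shows "gDem G \<subseteq> core G 1 T"
proof
  fix v assume v: "v \<in> gDem G"
  show "v \<in> core G 1 T"
  proof (cases "v = groot G")
    case True then show ?thesis unfolding core_def by simp
  next
    case False
    have "v \<in> fst T" "groot G \<in> fst T" "connected_on (gends G) (fst T) (snd T)"
      using assms(2) v unfolding routing_tree_def tree_in_def is_tree_def by auto
    then obtain vs es where "iswalk (snd T) (gends G) vs es" "hd vs = v" "last vs = groot G"
      unfolding connected_on_def by blast
    from walk_path[OF this(1)] this obtain ps qs where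
      p: "iswalk (snd T) (gends G) ps qs" "hd ps = v" "last ps = groot G" "distinct ps" by auto
    obtain w rest e es' where pe: "ps = v # w # rest" "qs = e # es'"
    proof (cases ps)
      case Nil then show ?thesis using walk_ne[OF p(1)] by simp
    next
      case (Cons a l)
      then show ?thesis
      proof (cases l)
        case Nil then show ?thesis using Cons p False by simp
      next
        case (Cons b l')
        then show ?thesis using \<open>ps = a # l\<close> p(1,2) that by (cases qs) auto
      qed
    qed
    have eT: "e \<in> snd T" and ee: "gends G e = (v, w) \<or> gends G e = (w, v)" using p(1) pe by auto
    have fin: "finite (gDem G)" using assms(1) unfolding valid_inst_def by (auto intro: finite_subset)
    have ex: "\<exists>vs es. iswalk (snd T) (gends G) vs es \<and> hd vs = v \<and> last vs = groot G
                  \<and> distinct vs \<and> e \<in> set es" using p pe by (intro exI[of _ ps] exI[of _ qs]) simp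
    have "real (gd G v) = (if (\<exists>vs es. iswalk (snd T) (gends G) vs es \<and> hd vs = v \<and> last vs = groot G
                  \<and> distinct vs \<and> e \<in> set es) then real (gd G v) else 0)"
      using ex by simp
    also have "\<dots> \<le> flow G T e" unfolding flow_def
      by (rule member_le_sum[OF v _ fin]) auto
    finally have "real (gd G v) \<le> flow G T e" .
    moreover have "gd G v > 0" using assms(1) v unfolding valid_inst_def by auto
    ultimately have "flow G T e \<ge> 1" by simp
    then show ?thesis unfolding core_def using eT ee by force
  qed
qed

lemma proc2_inv:
  "proc2 \<alpha> \<beta> G Cs T Res \<Longrightarrow> tree_in G T \<Longrightarrow> groot G \<in> fst T \<Longrightarrow> (\<forall>C\<in>set Cs. C \<subseteq> gV G) \<Longrightarrow>
    tree_in G Res \<and> fst T \<union> \<Union>(set Cs) \<subseteq> fst Res"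
proof (induction Cs arbitrary: T)
  case Nil
  then show ?case by simp
next
  case (Cons C Cs)
  obtain F' where F': "is_LAST \<alpha> \<beta> (contr_ends G (fst T)) (glen G)
              (contr_verts G (fst T) C) (contr_edges G (fst T) C) (groot G) F'"
    "proc2 \<alpha> \<beta> G Cs (fst T \<union> C, snd T \<union> F') Res" using Cons.prems(1) by auto
  have sub: "F' \<subseteq> gE G" "is_tree (contr_ends G (fst T)) (contr_verts G (fst T) C) F'"
    using F'(1) unfolding is_LAST_def contr_edges_def by auto
  have cen: "contr_ends G (fst T) = (\<lambda>e. (cmap (fst T) (groot G) (fst (gends G e)), cmap (fst T) (groot G) (snd (gends G e))))"
    by (rule ext) (simp add: contr_ends_def)
  have tr: "is_tree (gends G) (fst T) (snd T)" using Cons.prems(2) unfolding tree_in_def by auto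
  have "is_tree (gends G) (fst T \<union> C) (snd T \<union> F')"
    using step_tree[OF tr Cons.prems(3) cen] sub(2) unfolding contr_verts_def by simp
  then have "tree_in G (fst T \<union> C, snd T \<union> F')"
    using Cons.prems(2,4) sub(1) unfolding tree_in_def by auto
  then show ?case using Cons.IH[OF F'(2)] Cons.prems(3,4) by auto
qed



theorem lemma7:
  fixes G :: "('v, 'e) inst"
    and \<epsilon> \<alpha> \<beta> \<gamma> \<delta> lam :: real
    and Tsel :: "nat \<Rightarrow> 'v set \<times> 'e set"
    and T :: "'v set \<times> 'e set"
  assumes "valid_inst G"
    and "\<epsilon> > 0" and "\<alpha> > 1" and "\<beta> \<ge> (\<alpha> + 1) / (\<alpha> - 1)" and "\<gamma> > 1" and "\<delta> > 1"
    and "lam \<ge> 1"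
    and "\<forall>i \<le> Kpar \<epsilon> G. routing_tree G (Tsel i)
           \<and> (\<forall>T'. routing_tree G T' \<longrightarrow>
                 costA G (Mpar \<epsilon> i) (Tsel i) \<le> lam * costA G (Mpar \<epsilon> i) T')"
    and "proc2 \<alpha> \<beta> G (map (proc1_core \<epsilon> G Tsel) (proc1_L \<epsilon> \<gamma> \<delta> G Tsel)) ({groot G}, {}) T"
  shows "tree_in G T \<and> gDem G \<subseteq> fst T"
proof -
  note vG = assms(1)
  define K where "K = Kpar \<epsilon> G"
  define FT where "FT = final_trees \<epsilon> G Tsel"
  define b where "b = (\<lambda>i. buy_cost G (Mpar \<epsilon> i) (FT i))"
  define R where "R = (\<lambda>i. rent_cost G (Mpar \<epsilon> i) (FT i))"
  have rt: "routing_tree G (FT i)" for i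
    using final_in[of \<epsilon> G Tsel i] assms(8) unfolding FT_def by auto
  have Mpos: "Mpar \<epsilon> i > 0" for i unfolding Mpar_def using assms(2) by simp
  have Mmono: "Mpar \<epsilon> i \<le> Mpar \<epsilon> (Suc i)" for i unfolding Mpar_def using assms(2) by simp
  have bnn: "\<forall>i. b i \<ge> 0"
    unfolding b_def buy_cost_def using rt_facts(2)[OF vG rt] by (auto intro!: sum_nonneg)
  have P: "b (j - 1) \<le> b j" if j: "0 < j" "j \<le> K" "R j = 0" for j
  proof -
    obtain i where i: "j = Suc i" using j(1) by (cases j) auto
    have "Mpar \<epsilon> i * b i \<le> costA G (Mpar \<epsilon> i) (FT i)" unfolding b_def using buy_le[OF vG rt Mpos] .
    also have "\<dots> \<le> costA G (Mpar \<epsilon> i) (FT (Suc i))" unfolding FT_def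
      using final_step[of i \<epsilon> G Tsel] j i K_def by simp
    also have "\<dots> \<le> Mpar \<epsilon> i * b j" unfolding b_def
      using rent0[OF vG rt _ Mpos Mmono] j(3) i unfolding R_def by simp
    finally show ?thesis using Mpos[of i] i by simp
  qed
  have Rnn: "R i \<ge> 0" for i unfolding R_def using rent_nonneg[OF vG rt Mpos] .
  have R0: "R 0 = 0" unfolding R_def Mpar_def using rent_one[OF vG rt] by simp
  define xs where "xs = scan \<gamma> b [1..<1 + K] (Some (b 0))"
  have LB: "scan \<gamma> b [0..<Suc K] None = 0 # xs"
    unfolding xs_def by (simp add: upt_conv_Cons)
  have b0: "b 0 \<le> b 0 * \<gamma>" using bnn[rule_format, of 0] assms(5) by (simp add: mult_le_cancel_left1)
  then have b0': "b (1 - 1) \<ge> b 0 / \<gamma>" using assms(5) by (simp add: divide_le_eq)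
  have dec: "\<forall>i\<in>set xs. b i < b (i - 1)" unfolding xs_def
    using scan_dec[OF assms(5) bnn, of "b 0" 1 K] bnn b0' by simp
  have xsr: "set xs \<subseteq> {1..K}"
  proof -
    have "set xs \<subseteq> set [1..<1 + K]" unfolding xs_def by (rule scan_subset)
    also have "set [1..<1 + K] = {1..K}" by auto
    finally show ?thesis .
  qed
  have pos: "\<forall>x\<in>set (rev xs). R x > 0"
  proof
    fix x assume "x \<in> set (rev xs)"
    then have x: "x \<in> set xs" by simp
    have "R x \<noteq> 0"
    proof
      assume "R x = 0"
      then have "b (x - 1) \<le> b x" using P[of x] xsr x by auto
      then show False using dec x by fastforce
    qed
    then show "R x > 0" using Rnn[of x] by simp
  qed
  have Leq: "proc1_L \<epsilon> \<gamma> \<delta> G Tsel = scan \<delta> R (rev xs @ [0]) None"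
    unfolding proc1_L_def Let_def R_def FT_def K_def[symmetric] using LB unfolding b_def FT_def by simp
  have "0 \<in> set (proc1_L \<epsilon> \<gamma> \<delta> G Tsel)" unfolding Leq
    using scan_zero[of \<delta> R "rev xs" None] assms(6) R0 pos by simp
  then have c0: "proc1_core \<epsilon> G Tsel 0 \<in> set (map (proc1_core \<epsilon> G Tsel) (proc1_L \<epsilon> \<gamma> \<delta> G Tsel))" by simp
  have csub: "\<forall>C\<in>set (map (proc1_core \<epsilon> G Tsel) (proc1_L \<epsilon> \<gamma> \<delta> G Tsel)). C \<subseteq> gV G"
    unfolding proc1_core_def using core_sub[OF vG rt] FT_def by auto
  have rV: "groot G \<in> gV G" using vG unfolding valid_inst_def by simp
  have con0: "connected_on (gends G) {groot G} {}"
    unfolding connected_on_def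
  proof (intro ballI)
    fix u v assume "u \<in> {groot G}" "v \<in> {groot G}"
    then show "\<exists>vs es. iswalk {} (gends G) vs es \<and> hd vs = u \<and> last vs = v"
      by (intro exI[of _ "[groot G]"] exI[of _ "[]"]) simp
  qed
  have nc0: "\<not> has_cycle (gends G) {}"
  proof
    assume "has_cycle (gends G) {}"
    then obtain vs es where "iswalk {} (gends G) vs es" "es \<noteq> []" unfolding has_cycle_def by blast
    then show False using walk_edges[of "{}" "gends G" vs es] by auto
  qed
  have t0: "tree_in G ({groot G}, {})"
    using rV con0 nc0 unfolding tree_in_def is_tree_def by simp
  have res: "tree_in G T \<and> {groot G} \<union> \<Union>(set (map (proc1_core \<epsilon> G Tsel) (proc1_L \<epsilon> \<gamma> \<delta> G Tsel))) \<subseteq> fst T"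
    using proc2_inv[OF assms(9) t0 _ csub] by simp
  have "gDem G \<subseteq> proc1_core \<epsilon> G Tsel 0"
    unfolding proc1_core_def using dem_core[OF vG rt] FT_def by (simp add: Mpar_def)
  then show ?thesis using res c0 by blast
qed

end
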